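(* Let $d\in\mathbb{N}$ and $x,y\in\mathbb{R}^d$. Then $(x,y)\in\Pi$ if and only if $S_\ell(x,y)<\infty$ for every $\ell\in\mathbb{N}$.
   Context: For $z\in\mathbb{R}^d$, $\|z\|$ denotes the sup-norm distance from $z$ to $\mathbb{Z}^d$. Write $\mathbb{N}=\{1,2,\dots\}$. For $\psi:\mathbb{N}\to\mathbb{R}_{\ge 0}$, let $W(\psi)$ be the set of pairs $(x,y)\in\mathbb{R}^d\times\mathbb{R}^d$ for which $\|nx+y\|<\psi(n)$ holds for infinitely many $n\in\mathbb{N}$. $\mathcal{D}$ is the set of all non-increasing $\psi:\mathbb{N}\to\mathbb{R}_{\ge0}$ with $\sum_n\psi(n)^d=\infty$, and $\Pi=\bigcap_{\psi\in\mathcal{D}}W(\psi)$. For $\ell\in\mathbb{Z}$, $S_\ell(x,y)=\sum_{n\ge \ell}\min_{\ell\le m\le n}\|mx+y\|^d$, where the sum is over integers $n$ and the minimum over integers $m$. *)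

theory Defs
  imports "HOL-Analysis.Analysis"
begin

definition distZ :: "real ^ 'd \<Rightarrow> real" where
  "distZ z = (MAX i \<in> UNIV. \<bar>z $ i - of_int (round (z $ i))\<bar>)"

definition W :: "(nat \<Rightarrow> real) \<Rightarrow> ((real ^ 'd) \<times> (real ^ 'd)) set" where
  "W \<psi> = {(x, y). infinite {n::nat. n \<ge> 1 \<and> distZ (real n *\<^sub>R x + y) < \<psi> n}}"

text \<open>The class D of non-increasing non-negative psi on N = {1,2,...} with
  divergent sum of psi(n)^d (d = CARD('d)); the value at 0 plays no role.\<close>
definition Dcls :: "'d::finite itself \<Rightarrow> (nat \<Rightarrow> real) set" where
  "Dcls _ = {\<psi>. (\<forall>n\<ge>1. 0 \<le> \<psi> n) \<and> (\<forall>m n. 1 \<le> m \<longrightarrow> m \<le> n \<longrightarrow> \<psi> n \<le> \<psi> m)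
              \<and> (\<Sum>n. ennreal (\<psi> (n + 1) ^ CARD('d))) = \<infinity>}"

definition Pi_set :: "((real ^ 'd::finite) \<times> (real ^ 'd)) set" where
  "Pi_set = (\<Inter>\<psi> \<in> Dcls TYPE('d). W \<psi>)"

definition S :: "nat \<Rightarrow> real ^ 'd::finite \<Rightarrow> real ^ 'd \<Rightarrow> ennreal" where
  "S l x y = (\<Sum>k. ennreal (MIN m \<in> {l..l + k}. distZ (real m *\<^sub>R x + y) ^ CARD('d)))"

end

theory Submission
  imports Defs
begin

lemma distZ_nonneg: "0 \<le> distZ (z :: real ^ 'd::finite)"
  unfolding distZ_def by (subst Max_ge_iff) auto

lemma tail_infinite:
  fixes f :: "nat \<Rightarrow> real"
  assumes "\<And>n. 0 \<le> f n" "(\<Sum>n. ennreal (f n)) = \<infinity>"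
  shows "(\<Sum>n. ennreal (f (n + i))) = \<infinity>"
proof (rule ccontr)
  assume a: "(\<Sum>n. ennreal (f (n + i))) \<noteq> \<infinity>"
  have "(\<Sum>n. ennreal (f n)) = (\<Sum>n. ennreal (f (n + i))) + (\<Sum>j<i. ennreal (f j))"
    by (rule suminf_offset) (rule summableI)
  also have "\<dots> < \<infinity>" using a by (simp add: less_top)
  finally show False using assms(2) by simp
qed

theorem lemma4:
  fixes x y :: "real ^ 'd::finite"
  shows "(x, y) \<in> Pi_set \<longleftrightarrow> (\<forall>l::nat. l \<ge> 1 \<longrightarrow> S l x y < \<infinity>)"
proof
  define a where "a m = distZ (real m *\<^sub>R x + y)" for m :: nat
  have a0: "0 \<le> a m" for m unfolding a_def by (rule distZ_nonneg)
  assume P: "(x, y) \<in> Pi_set"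
  show "\<forall>l::nat. l \<ge> 1 \<longrightarrow> S l x y < \<infinity>"
  proof (intro allI impI, rule ccontr)
    fix l :: nat assume l: "l \<ge> 1" and "\<not> S l x y < \<infinity>"
    hence Sinf: "S l x y = \<infinity>" by (simp add: less_top[symmetric])
    define \<psi> where "\<psi> n = Min (a ` {l..max l n})" for n
    have psi0: "0 \<le> \<psi> n" for n unfolding \<psi>_def using a0 by (subst Min_ge_iff) auto
    have mono: "\<psi> n \<le> \<psi> m" if "m \<le> n" for m n
      unfolding \<psi>_def using that by (intro Min_antimono) auto
    have le: "\<psi> n \<le> a n" if "l \<le> n" for n
      unfolding \<psi>_def using that by (intro Min_le) auto
    have "S l x y \<le> (\<Sum>k. ennreal (\<psi> (l + k) ^ CARD('d)))"
      unfolding S_def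
    proof (rule suminf_le[OF _ summableI summableI])
      fix k
      have "\<psi> (l + k) \<in> a ` {l..l+k}" unfolding \<psi>_def max_absorb2[of l "l+k", OF le_add1] by (intro Min_in) auto
      then obtain m where m: "m \<in> {l..l+k}" "\<psi> (l + k) = a m" by auto
      have "(MIN m \<in> {l..l + k}. distZ (real m *\<^sub>R x + y) ^ CARD('d)) \<le> a m ^ CARD('d)"
        using m unfolding a_def by (intro Min_le) auto
      then show "ennreal (MIN m \<in> {l..l + k}. distZ (real m *\<^sub>R x + y) ^ CARD('d))
          \<le> ennreal (\<psi> (l + k) ^ CARD('d))" using m by (intro ennreal_leI) simp
    qed
    also have "\<dots> \<le> (\<Sum>n. ennreal (\<psi> (n + 1) ^ CARD('d)))"
    proof (rule suminf_le[OF _ summableI summableI])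
      fix n
      show "ennreal (\<psi> (l + n) ^ CARD('d)) \<le> ennreal (\<psi> (n + 1) ^ CARD('d))"
        using l by (intro ennreal_leI power_mono mono psi0) auto
    qed
    finally have sum: "(\<Sum>n. ennreal (\<psi> (n + 1) ^ CARD('d))) = \<infinity>"
      using Sinf by (simp add: top_unique)
    have "\<psi> \<in> Dcls TYPE('d)" unfolding Dcls_def using psi0 mono sum by auto
    hence "(x, y) \<in> W \<psi>" using P unfolding Pi_set_def by auto
    hence inf: "infinite {n::nat. n \<ge> 1 \<and> distZ (real n *\<^sub>R x + y) < \<psi> n}" unfolding W_def by auto
    have "{n::nat. n \<ge> 1 \<and> distZ (real n *\<^sub>R x + y) < \<psi> n} \<subseteq> {..<l}"
    proof
      fix n assume "n \<in> {n::nat. n \<ge> 1 \<and> distZ (real n *\<^sub>R x + y) < \<psi> n}"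
      hence "a n < \<psi> n" unfolding a_def by auto
      thus "n \<in> {..<l}" using le[of n] by (cases "l \<le> n") auto
    qed
    thus False using inf finite_subset by blast
  qed
next
  define a where "a m = distZ (real m *\<^sub>R x + y)" for m :: nat
  have a0: "0 \<le> a m" for m unfolding a_def by (rule distZ_nonneg)
  assume H: "\<forall>l::nat. l \<ge> 1 \<longrightarrow> S l x y < \<infinity>"
  show "(x, y) \<in> Pi_set"
    unfolding Pi_set_def
  proof (rule INT_I, rule ccontr)
    fix \<psi> assume D: "\<psi> \<in> Dcls TYPE('d)" and nW: "(x, y) \<notin> W \<psi>"
    have psi0: "\<And>n. n \<ge> 1 \<Longrightarrow> 0 \<le> \<psi> n"
      and mono: "\<And>m n. 1 \<le> m \<Longrightarrow> m \<le> n \<Longrightarrow> \<psi> n \<le> \<psi> m"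
      and sum: "(\<Sum>n. ennreal (\<psi> (n + 1) ^ CARD('d))) = \<infinity>"
      using D unfolding Dcls_def by auto
    have "finite {n::nat. n \<ge> 1 \<and> distZ (real n *\<^sub>R x + y) < \<psi> n}" using nW unfolding W_def by auto
    then obtain B where B: "\<And>n. n \<in> {n::nat. n \<ge> 1 \<and> distZ (real n *\<^sub>R x + y) < \<psi> n} \<Longrightarrow> n \<le> B"
      by (meson finite_nat_set_iff_bounded_le)
    define N where "N = B + 1"
    have N1: "N \<ge> 1" unfolding N_def by simp
    have big: "\<psi> n \<le> a n" if "n \<ge> N" for n
    proof (rule ccontr)
      assume "\<not> \<psi> n \<le> a n"
      hence "n \<in> {n::nat. n \<ge> 1 \<and> distZ (real n *\<^sub>R x + y) < \<psi> n}"
        using that unfolding N_def a_def by auto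
      hence "n \<le> B" by (rule B)
      thus False using that unfolding N_def by simp
    qed
    have tinf: "(\<Sum>k. ennreal (\<psi> (k + N + 1) ^ CARD('d))) = \<infinity>"
      by (rule tail_infinite[of "\<lambda>n. \<psi> (n + 1) ^ CARD('d)" N])
        (use sum in \<open>simp_all add: psi0\<close>)
    have "(\<Sum>k. ennreal (\<psi> (k + N + 1) ^ CARD('d))) \<le> S N x y"
      unfolding S_def
    proof (rule suminf_le[OF _ summableI summableI])
      fix k
      have "\<psi> (k + N + 1) ^ CARD('d) \<le> (MIN m \<in> {N..N + k}. distZ (real m *\<^sub>R x + y) ^ CARD('d))"
      proof (subst Min_ge_iff, simp, simp, intro ballI)
        fix z assume "z \<in> (\<lambda>m. distZ (real m *\<^sub>R x + y) ^ CARD('d)) ` {N..N + k}"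
        then obtain m where m: "m \<in> {N..N+k}" "z = a m ^ CARD('d)" unfolding a_def by auto
        have "\<psi> (k + N + 1) \<le> \<psi> m" using m N1 by (intro mono) auto
        also have "\<dots> \<le> a m" using big m by auto
        finally show "\<psi> (k + N + 1) ^ CARD('d) \<le> z"
          using m psi0[of "k + N + 1"] by (simp add: power_mono)
      qed
      thus "ennreal (\<psi> (k + N + 1) ^ CARD('d))
          \<le> ennreal (MIN m \<in> {N..N + k}. distZ (real m *\<^sub>R x + y) ^ CARD('d))"
        by (rule ennreal_leI)
    qed
    hence "S N x y = \<infinity>" using tinf by (simp add: top_unique)
    thus False using H N1 by auto
  qed
qed

end
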